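(* Let $(A,S)$ be a QP and $I\subseteq Q_0$ a subset of vertices. Then the homomorphism $\psi_I$ induces an epimorphism of Jacobian algebras $\mathcal P(A,S)\to\mathcal P(A|_I,S|_I)$ and an epimorphism of deformation spaces $\mathrm{Def}(A,S)\to\mathrm{Def}(A|_I,S|_I)$. Consequently, if $\mathcal P(A,S)$ is finite-dimensional, or if $(A,S)$ is rigid, then the same is true for $(A|_I,S|_I)$.
   Context: Fix a field $K$; quiver $Q$ with vertices $Q_0$; $R=K^{Q_0}$; arrow span $A$, $A_{i,j}=e_iAe_j$ spanned by arrows $j\to i$. Complete path algebra $R\langle\langle A\rangle\rangle=\prod_dA^d$ with $\mathfrak m$-adic topology. Potentials; cyclic equivalence (difference in the closure of the span of $a_1\cdots a_d-a_2\cdots a_da_1$); $\partial_a(a_1\cdots a_d)=\sum_{p:a_p=a}a_{p+1}\cdots a_da_1\cdots a_{p-1}$; $J(S)$ closure of the ideal generated by all $\partial_aS$; $\mathcal P(A,S)=R\langle\langle A\rangle\rangle/J(S)$. QP: no loops, no two cyclically equivalent cyclic paths in $S$. $\mathrm{Tr}(U)=U/\{U,U\}$ ($\{U,U\}$ closure of span of commutators); $\mathrm{Def}(A,S)=\mathrm{Tr}(\mathcal P(A,S))/R$; $(A,S)$ rigid if $\mathrm{Def}(A,S)=0$. Restriction: $A|_I=\bigoplus_{i,j\in I}A_{i,j}$ (over vertex set $I$, with $R_I=K^I$), $\psi_I:R\langle\langle A\rangle\rangle\to R\langle\langle A|_I\rangle\rangle$ the algebra homomorphism fixing arrows of $A|_I$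 and sending all other arrows (and $e_i$, $i\notin I$) to $0$, and $S|_I=\psi_I(S)$. *)

theory Defs
  imports Main
begin

text \<open>A quiver: vertex set Q0, arrow set Q1, and for each arrow a its head
  (target) and tail (source); an arrow a from j to i lies in A_{i,j} = e_i A e_j.\<close>

record ('v, 'e) quiver =
  verts :: "'v set"
  arrs  :: "'e set"
  hd_of :: "'e \<Rightarrow> 'v"
  tl_of :: "'e \<Rightarrow> 'v"

definition wf_quiver :: "('v, 'e) quiver \<Rightarrow> bool" where
  "wf_quiver Q \<longleftrightarrow> finite (verts Q) \<and> finite (arrs Q) \<and>
     (\<forall>a\<in>arrs Q. hd_of Q a \<in> verts Q \<and> tl_of Q a \<in> verts Q)"

definition no_loops :: "('v, 'e) quiver \<Rightarrow> bool" where
  "no_loops Q \<longleftrightarrow> (\<forall>a\<in>arrs Q. hd_of Q a \<noteq> tl_of Q a)"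

text \<open>Paths. A path is a pair (v, [a_1,...,a_d]) representing the product
  a_1 a_2 ... a_d (with tl a_p = hd a_(p+1)); v is its head vertex.
  The pair (v, []) is the trivial path e_v.\<close>

type_synonym ('v, 'e) path = "'v \<times> 'e list"

fun composable :: "('v, 'e) quiver \<Rightarrow> 'e list \<Rightarrow> bool" where
  "composable Q [] = True"
| "composable Q [a] = (a \<in> arrs Q)"
| "composable Q (a # b # xs) = (a \<in> arrs Q \<and> tl_of Q a = hd_of Q b \<and> composable Q (b # xs))"

definition valid_path :: "('v, 'e) quiver \<Rightarrow> ('v, 'e) path \<Rightarrow> bool" where
  "valid_path Q p = (case p of
       (v, []) \<Rightarrow> v \<in> verts Q
     | (v, a # xs) \<Rightarrow> v = hd_of Q a \<and> composable Q (a # xs))"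

definition ptail :: "('v, 'e) quiver \<Rightarrow> ('v, 'e) path \<Rightarrow> 'v" where
  "ptail Q p = (if snd p = [] then fst p else tl_of Q (last (snd p)))"

definition cyclic_path :: "('v, 'e) quiver \<Rightarrow> ('v, 'e) path \<Rightarrow> bool" where
  "cyclic_path Q p \<longleftrightarrow> valid_path Q p \<and> snd p \<noteq> [] \<and> ptail Q p = fst p"

definition cyc_equiv :: "('v, 'e) path \<Rightarrow> ('v, 'e) path \<Rightarrow> bool" where
  "cyc_equiv p q \<longleftrightarrow> (\<exists>k. snd q = rotate k (snd p))"

text \<open>Since the quiver is finite, each A^d is finite-dimensional with basis the
  paths of length d, so an element of R<<A>> = prod_d A^d is exactly an arbitrary
  K-valued function on the (valid) paths: its coefficient family.\<close>

type_synonym ('v, 'e, 'k) cpelem = "('v, 'e) path \<Rightarrow> 'k"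

definition cpa :: "('v, 'e) quiver \<Rightarrow> ('v, 'e, 'k::field) cpelem set" where
  "cpa Q = {f. \<forall>p. f p \<noteq> 0 \<longrightarrow> valid_path Q p}"

definition cp_add :: "('v, 'e, 'k::field) cpelem \<Rightarrow> ('v, 'e, 'k) cpelem \<Rightarrow> ('v, 'e, 'k) cpelem" where
  "cp_add f g = (\<lambda>p. f p + g p)"

definition cp_diff :: "('v, 'e, 'k::field) cpelem \<Rightarrow> ('v, 'e, 'k) cpelem \<Rightarrow> ('v, 'e, 'k) cpelem" where
  "cp_diff f g = (\<lambda>p. f p - g p)"

definition cp_smult :: "'k::field \<Rightarrow> ('v, 'e, 'k) cpelem \<Rightarrow> ('v, 'e, 'k) cpelem" where
  "cp_smult c f = (\<lambda>p. c * f p)"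

definition cp_zero :: "('v, 'e, 'k::field) cpelem" where
  "cp_zero = (\<lambda>p. 0)"

definition cp_one :: "('v, 'e) quiver \<Rightarrow> ('v, 'e, 'k::field) cpelem" where
  "cp_one Q = (\<lambda>(v, xs). if xs = [] \<and> v \<in> verts Q then 1 else 0)"

definition cp_mult :: "('v, 'e) quiver \<Rightarrow> ('v, 'e, 'k::field) cpelem \<Rightarrow> ('v, 'e, 'k) cpelem
                       \<Rightarrow> ('v, 'e, 'k) cpelem" where
  "cp_mult Q f g = (\<lambda>(v, xs). \<Sum>k\<le>length xs.
       f (v, take k xs) * g (ptail Q (v, take k xs), drop k xs))"

text \<open>Closure in the m-adic topology (m^n = elements supported on paths of
  length at least n).\<close>
definition madic_closure :: "('v, 'e) quiver \<Rightarrow> ('v, 'e, 'k::field) cpelem set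
                              \<Rightarrow> ('v, 'e, 'k) cpelem set" where
  "madic_closure Q U = {f \<in> cpa Q. \<forall>n. \<exists>u\<in>U. \<forall>p. length (snd p) < n \<longrightarrow> f p = u p}"

inductive_set gen_ideal :: "('v, 'e) quiver \<Rightarrow> ('v, 'e, 'k::field) cpelem set
                              \<Rightarrow> ('v, 'e, 'k) cpelem set"
  for Q G where
  gi_zero: "cp_zero \<in> gen_ideal Q G"
| gi_gen: "g \<in> G \<Longrightarrow> x \<in> cpa Q \<Longrightarrow> y \<in> cpa Q \<Longrightarrow> cp_mult Q (cp_mult Q x g) y \<in> gen_ideal Q G"
| gi_add: "u \<in> gen_ideal Q G \<Longrightarrow> w \<in> gen_ideal Q G \<Longrightarrow> cp_add u w \<in> gen_ideal Q G"

inductive_set comm_span :: "('v, 'e) quiver \<Rightarrow> ('v, 'e, 'k::field) cpelem set"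
  for Q where
  cs_zero: "cp_zero \<in> comm_span Q"
| cs_comm: "x \<in> cpa Q \<Longrightarrow> y \<in> cpa Q \<Longrightarrow> cp_diff (cp_mult Q x y) (cp_mult Q y x) \<in> comm_span Q"
| cs_add: "u \<in> comm_span Q \<Longrightarrow> w \<in> comm_span Q \<Longrightarrow> cp_add u w \<in> comm_span Q"

text \<open>The subalgebra R = K^{Q_0} = span of the trivial paths e_i.\<close>
definition R_part :: "('v, 'e) quiver \<Rightarrow> ('v, 'e, 'k::field) cpelem set" where
  "R_part Q = {f \<in> cpa Q. \<forall>p. f p \<noteq> 0 \<longrightarrow> snd p = []}"

text \<open>Potentials: elements of the closure of the span of cyclic paths, i.e.
  elements supported on cyclic paths.\<close>
definition potential :: "('v, 'e) quiver \<Rightarrow> ('v, 'e, 'k::field) cpelem \<Rightarrow> bool" where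
  "potential Q S \<longleftrightarrow> S \<in> cpa Q \<and> (\<forall>p. S p \<noteq> 0 \<longrightarrow> cyclic_path Q p)"

definition is_QP :: "('v, 'e) quiver \<Rightarrow> ('v, 'e, 'k::field) cpelem \<Rightarrow> bool" where
  "is_QP Q S \<longleftrightarrow> wf_quiver Q \<and> no_loops Q \<and> potential Q S \<and>
     (\<forall>p q. S p \<noteq> 0 \<longrightarrow> S q \<noteq> 0 \<longrightarrow> cyc_equiv p q \<longrightarrow> p = q)"

text \<open>Cyclic derivative, extended by linearity and continuity:
  d_a(a_1...a_d) = sum_{p: a_p = a} a_(p+1)...a_d a_1...a_(p-1).
  The path (w, ys) arises from the occurrence of a at position p of the cyclic path c
  exactly when c rotated to start after position p equals ys @ [a]; its head is
  w = tl a.  Summing over the positions p amounts to summing over the rotations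
  rotate k (ys @ [a]), k < length ys + 1.\<close>
definition cyc_deriv :: "('v, 'e) quiver \<Rightarrow> 'e \<Rightarrow> ('v, 'e, 'k::field) cpelem
                          \<Rightarrow> ('v, 'e, 'k) cpelem" where
  "cyc_deriv Q a S = (\<lambda>(w, ys). if w = tl_of Q a then
       (\<Sum>k<Suc (length ys). S (hd_of Q (hd (rotate k (ys @ [a]))), rotate k (ys @ [a])))
     else 0)"

definition jac_ideal :: "('v, 'e) quiver \<Rightarrow> ('v, 'e, 'k::field) cpelem \<Rightarrow> ('v, 'e, 'k) cpelem set" where
  "jac_ideal Q S = madic_closure Q (gen_ideal Q {cyc_deriv Q a S | a. a \<in> arrs Q})"

definition jac_rel :: "('v, 'e) quiver \<Rightarrow> ('v, 'e, 'k::field) cpelem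
                        \<Rightarrow> (('v, 'e, 'k) cpelem \<times> ('v, 'e, 'k) cpelem) set" where
  "jac_rel Q S = {(f, g). f \<in> cpa Q \<and> g \<in> cpa Q \<and> cp_diff f g \<in> jac_ideal Q S}"

definition jacobian_algebra :: "('v, 'e) quiver \<Rightarrow> ('v, 'e, 'k::field) cpelem
                                 \<Rightarrow> ('v, 'e, 'k) cpelem set set" where
  "jacobian_algebra Q S = cpa Q // jac_rel Q S"

definition jac_fin_dim :: "('v, 'e) quiver \<Rightarrow> ('v, 'e, 'k::field) cpelem \<Rightarrow> bool" where
  "jac_fin_dim Q S \<longleftrightarrow> (\<exists>F. finite F \<and> F \<subseteq> cpa Q \<and>
     (\<forall>f\<in>cpa Q. \<exists>c. cp_diff f (\<lambda>p. \<Sum>x\<in>F. c x * x p) \<in> jac_ideal Q S))"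

text \<open>Def(A,S) = Tr(P(A,S))/R where Tr(P) = P/{P,P}.  The preimage in R<<A>> of
  {P,P} (closure of the span of commutators of P) is the m-adic closure of
  J(S) + span of commutators; hence Def(A,S) = R<<A>> / def_sub, where def_sub is
  that closure plus R.\<close>
definition def_sub :: "('v, 'e) quiver \<Rightarrow> ('v, 'e, 'k::field) cpelem \<Rightarrow> ('v, 'e, 'k) cpelem set" where
  "def_sub Q S = {cp_add u r | u r.
       u \<in> madic_closure Q {cp_add j c | j c. j \<in> jac_ideal Q S \<and> c \<in> comm_span Q}
       \<and> r \<in> R_part Q}"

definition def_rel :: "('v, 'e) quiver \<Rightarrow> ('v, 'e, 'k::field) cpelem
                        \<Rightarrow> (('v, 'e, 'k) cpelem \<times> ('v, 'e, 'k) cpelem) set" where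
  "def_rel Q S = {(f, g). f \<in> cpa Q \<and> g \<in> cpa Q \<and> cp_diff f g \<in> def_sub Q S}"

definition def_space :: "('v, 'e) quiver \<Rightarrow> ('v, 'e, 'k::field) cpelem
                          \<Rightarrow> ('v, 'e, 'k) cpelem set set" where
  "def_space Q S = cpa Q // def_rel Q S"

text \<open>Rigid: Def(A,S) = 0, i.e. every element of R<<A>> lies in def_sub.\<close>
definition rigid :: "('v, 'e) quiver \<Rightarrow> ('v, 'e, 'k::field) cpelem \<Rightarrow> bool" where
  "rigid Q S \<longleftrightarrow> cpa Q \<subseteq> def_sub Q S"

definition restrict_quiver :: "('v, 'e) quiver \<Rightarrow> 'v set \<Rightarrow> ('v, 'e) quiver" where
  "restrict_quiver Q I = Q\<lparr> verts := I,
      arrs := {a \<in> arrs Q. hd_of Q a \<in> I \<and> tl_of Q a \<in> I} \<rparr>"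

text \<open>psi_I: the continuous algebra homomorphism fixing the arrows of A|_I and killing
  the other arrows and the e_i, i not in I.\<close>
definition psi :: "('v, 'e) quiver \<Rightarrow> 'v set \<Rightarrow> ('v, 'e, 'k::field) cpelem \<Rightarrow> ('v, 'e, 'k) cpelem" where
  "psi Q I f = (\<lambda>p. if valid_path (restrict_quiver Q I) p then f p else 0)"

definition jac_induced :: "('v, 'e) quiver \<Rightarrow> 'v set \<Rightarrow> ('v, 'e, 'k::field) cpelem
                            \<Rightarrow> ('v, 'e, 'k) cpelem set \<Rightarrow> ('v, 'e, 'k) cpelem set" where
  "jac_induced Q I S C = jac_rel (restrict_quiver Q I) (psi Q I S) `` {psi Q I (SOME x. x \<in> C)}"

definition def_induced :: "('v, 'e) quiver \<Rightarrow> 'v set \<Rightarrow> ('v, 'e, 'k::field) cpelem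
                            \<Rightarrow> ('v, 'e, 'k) cpelem set \<Rightarrow> ('v, 'e, 'k) cpelem set" where
  "def_induced Q I S C = def_rel (restrict_quiver Q I) (psi Q I S) `` {psi Q I (SOME x. x \<in> C)}"

end

theory Submission
  imports Defs
begin



abbreviation RQ where "RQ Q I \<equiv> restrict_quiver Q I"

lemma RQ_simps[simp]:
  "hd_of (restrict_quiver Q I) = hd_of Q" "tl_of (restrict_quiver Q I) = tl_of Q"
  "verts (restrict_quiver Q I) = I"
  "arrs (restrict_quiver Q I) = {a \<in> arrs Q. hd_of Q a \<in> I \<and> tl_of Q a \<in> I}"
  by (simp_all add: restrict_quiver_def)

lemma ptail_RQ[simp]: "ptail (restrict_quiver Q I) = ptail Q"
  by (rule ext) (simp add: ptail_def)

lemma cp_mult_RQ[simp]: "cp_mult (restrict_quiver Q I) = cp_mult Q"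
  by (intro ext) (simp add: cp_mult_def)

lemma composable_append:
  "composable Q (xs @ ys) \<longleftrightarrow> composable Q xs \<and> composable Q ys \<and>
     (xs \<noteq> [] \<longrightarrow> ys \<noteq> [] \<longrightarrow> tl_of Q (last xs) = hd_of Q (hd ys))"
proof (induction xs)
  case Nil then show ?case by simp
next
  case (Cons x xs)
  show ?case
  proof (cases xs)
    case Nil then show ?thesis by (cases ys) auto
  next
    case (Cons z zs) then show ?thesis using Cons.IH by auto
  qed
qed

lemma composable_set: "composable Q xs \<Longrightarrow> set xs \<subseteq> arrs Q"
  by (induction Q xs rule: composable.induct) auto

lemma composable_RQ:
  "composable (restrict_quiver Q I) xs \<longleftrightarrow> composable Q xs \<and> set xs \<subseteq> arrs (restrict_quiver Q I)"
  by (induction "restrict_quiver Q I" xs rule: composable.induct) auto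

lemma valid_RQ:
  assumes I: "I \<subseteq> verts Q"
  shows "valid_path (restrict_quiver Q I) (v, xs) \<longleftrightarrow>
     valid_path Q (v, xs) \<and> set xs \<subseteq> arrs (restrict_quiver Q I) \<and> (xs = [] \<longrightarrow> v \<in> I)"
  using I by (cases xs) (auto simp: valid_path_def composable_RQ)

lemma valid_split:
  assumes wf: "\<forall>a\<in>arrs Q. hd_of Q a \<in> verts Q \<and> tl_of Q a \<in> verts Q"
  shows "valid_path Q (v, ys @ zs) \<longleftrightarrow> valid_path Q (v, ys) \<and> valid_path Q (ptail Q (v, ys), zs)"
proof (cases ys)
  case Nil
  then show ?thesis
  proof (cases zs)
    case (Cons z zs')
    then show ?thesis using Nil wf composable_set[of Q zs]
      by (auto simp: valid_path_def ptail_def)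
  qed (simp add: valid_path_def ptail_def)
next
  case (Cons y ys')
  then show ?thesis
  proof (cases zs)
    case Nil
    have "composable Q ys \<Longrightarrow> last ys \<in> arrs Q"
      using composable_set[of Q ys] \<open>ys = y # ys'\<close> by auto
    then show ?thesis using Nil Cons wf
      by (auto simp: valid_path_def ptail_def)
  next
    case (Cons z zs')
    show ?thesis using Cons \<open>ys = y # ys'\<close>
      composable_append[of Q "y # ys'" "z # zs'"]
      by (auto simp: valid_path_def ptail_def)
  qed
qed

lemma psi_mult:
  assumes I: "I \<subseteq> verts Q"
  shows "psi Q I (cp_mult Q f g) = cp_mult (restrict_quiver Q I) (psi Q I f) (psi Q I g)"
proof (rule ext)
  fix p :: "('a, 'b) path"
  obtain v xs where p: "p = (v, xs)" by (cases p)
  have wf: "\<forall>a\<in>arrs (RQ Q I). hd_of (RQ Q I) a \<in> verts (RQ Q I) \<and> tl_of (RQ Q I) a \<in> verts (RQ Q I)"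
    by simp
  have sp: "valid_path (RQ Q I) (v, xs) \<longleftrightarrow> valid_path (RQ Q I) (v, take k xs) \<and>
      valid_path (RQ Q I) (ptail Q (v, take k xs), drop k xs)" for k
    using valid_split[OF wf, of v "take k xs" "drop k xs"] by simp
  show "psi Q I (cp_mult Q f g) p = cp_mult (RQ Q I) (psi Q I f) (psi Q I g) p"
  proof (cases "valid_path (RQ Q I) (v, xs)")
    case True
    then show ?thesis using sp by (simp add: p psi_def cp_mult_def)
  next
    case False
    then show ?thesis using sp by (auto simp: p psi_def cp_mult_def intro!: sum.neutral)
  qed
qed



definition cyc_comp where
  "cyc_comp Q xs \<longleftrightarrow> xs \<noteq> [] \<and> composable Q xs \<and> tl_of Q (last xs) = hd_of Q (hd xs)"

lemma cyclic_path_iff: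
  "cyclic_path Q (v, xs) \<longleftrightarrow> xs \<noteq> [] \<and> v = hd_of Q (hd xs) \<and> cyc_comp Q xs"
  by (cases xs) (auto simp: cyclic_path_def valid_path_def ptail_def cyc_comp_def)

lemma cyc_comp_rotate1: "cyc_comp Q xs \<Longrightarrow> cyc_comp Q (rotate1 xs)"
proof (cases xs)
  case (Cons a ys)
  assume c: "cyc_comp Q xs"
  show ?thesis
  proof (cases ys)
    case Nil then show ?thesis using c Cons by simp
  next
    case (Cons b zs)
    have "composable Q ([a] @ ys)" using c \<open>xs = a # ys\<close> by (simp add: cyc_comp_def)
    then have h: "a \<in> arrs Q" "composable Q ys" "tl_of Q a = hd_of Q (hd ys)"
      using composable_append[of Q "[a]" ys] Cons by auto
    have "tl_of Q (last ys) = hd_of Q a" using c \<open>xs = a # ys\<close> Cons by (simp add: cyc_comp_def)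
    then have "composable Q (ys @ [a])" using composable_append[of Q ys "[a]"] h Cons by simp
    then show ?thesis using \<open>xs = a # ys\<close> h Cons by (simp add: cyc_comp_def)
  qed
qed (simp add: cyc_comp_def)

lemma cyc_comp_rotate: "cyc_comp Q xs \<Longrightarrow> cyc_comp Q (rotate k xs)"
  by (induction k) (auto intro: cyc_comp_rotate1)

lemma cyc_comp_rotate_rev:
  assumes "cyc_comp Q (rotate k xs)" shows "cyc_comp Q xs"
proof -
  have ne: "xs \<noteq> []" using assms by (auto simp: cyc_comp_def)
  let ?n = "length xs"
  have lt: "k mod ?n < ?n" using ne by simp
  have "rotate k xs = rotate (k mod ?n) xs" by (rule rotate_conv_mod)
  then have "rotate (?n - k mod ?n) (rotate k xs) = rotate (?n - k mod ?n + k mod ?n) xs"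
    by (simp add: rotate_rotate)
  also have "?n - k mod ?n + k mod ?n = ?n" using lt by simp
  finally have "rotate (?n - k mod ?n) (rotate k xs) = xs" by simp
  then show ?thesis using cyc_comp_rotate[OF assms, of "?n - k mod ?n"] by simp
qed

lemma cyc_comp_snoc:
  assumes "cyc_comp Q (ys @ [a])"
  shows "a \<in> arrs Q" "composable Q ys"
    "ys = [] \<Longrightarrow> tl_of Q a = hd_of Q a"
    "ys \<noteq> [] \<Longrightarrow> hd_of Q (hd ys) = tl_of Q a \<and> tl_of Q (last ys) = hd_of Q a"
  using assms composable_append[of Q ys "[a]"] by (auto simp: cyc_comp_def)



lemma rot_key:
  assumes I: "I \<subseteq> verts Q" and pot: "potential Q S"
    and a: "a \<in> arrs (restrict_quiver Q I)"
    and nz: "S (hd_of Q (hd (rotate k (ys @ [a]))), rotate k (ys @ [a])) \<noteq> 0"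
  shows "valid_path (restrict_quiver Q I) (hd_of Q (hd (rotate k (ys @ [a]))), rotate k (ys @ [a]))
     \<longleftrightarrow> valid_path (restrict_quiver Q I) (tl_of Q a, ys)"
proof -
  let ?r = "rotate k (ys @ [a])"
  have cp: "cyclic_path Q (hd_of Q (hd ?r), ?r)" using pot nz by (auto simp: potential_def)
  then have vr: "valid_path Q (hd_of Q (hd ?r), ?r)" by (simp add: cyclic_path_def)
  have cc: "cyc_comp Q (ys @ [a])" using cp cyclic_path_iff cyc_comp_rotate_rev by metis
  have l: "valid_path (RQ Q I) (hd_of Q (hd ?r), ?r) \<longleftrightarrow> set ys \<subseteq> arrs (RQ Q I)"
    using valid_RQ[OF I, of "hd_of Q (hd ?r)" ?r] vr a by auto
  have "valid_path Q (tl_of Q a, ys)"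
  proof (cases ys)
    case Nil then show ?thesis using a I by (auto simp: valid_path_def)
  next
    case (Cons b zs)
    then show ?thesis using cyc_comp_snoc[OF cc] by (auto simp: valid_path_def)
  qed
  then have r: "valid_path (RQ Q I) (tl_of Q a, ys) \<longleftrightarrow> set ys \<subseteq> arrs (RQ Q I)"
    using valid_RQ[OF I, of "tl_of Q a" ys] a by auto
  show ?thesis using l r by simp
qed

lemma psi_cyc_deriv_in:
  assumes I: "I \<subseteq> verts Q" and pot: "potential Q S"
    and a: "a \<in> arrs (restrict_quiver Q I)"
  shows "psi Q I (cyc_deriv Q a S) = cyc_deriv (restrict_quiver Q I) a (psi Q I S)"
proof (rule ext)
  fix p :: "('a, 'b) path"
  obtain w ys where p: "p = (w, ys)" by (cases p)
  show "psi Q I (cyc_deriv Q a S) p = cyc_deriv (restrict_quiver Q I) a (psi Q I S) p"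
  proof (cases "w = tl_of Q a")
    case False then show ?thesis by (simp add: p psi_def cyc_deriv_def)
  next
    case True
    note key = rot_key[OF I pot a]
    show ?thesis
    proof (cases "valid_path (RQ Q I) (w, ys)")
      case True
      have e: "psi Q I S (hd_of Q (hd (rotate k (ys @ [a]))), rotate k (ys @ [a]))
          = S (hd_of Q (hd (rotate k (ys @ [a]))), rotate k (ys @ [a]))" for k
        using key[of k ys] True \<open>w = tl_of Q a\<close> by (auto simp: psi_def)
      have "psi Q I (cyc_deriv Q a S) p = cyc_deriv Q a S p" using True by (simp add: p psi_def)
      also have "\<dots> = cyc_deriv (restrict_quiver Q I) a (psi Q I S) p"
        using \<open>w = tl_of Q a\<close> by (simp add: p cyc_deriv_def e)
      finally show ?thesis .
    next
      case False
      have e: "psi Q I S (hd_of Q (hd (rotate k (ys @ [a]))), rotate k (ys @ [a])) = 0" for k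
        using key[of k ys] False \<open>w = tl_of Q a\<close> by (auto simp: psi_def)
      have "psi Q I (cyc_deriv Q a S) p = 0" using False by (simp add: p psi_def)
      also have "\<dots> = cyc_deriv (restrict_quiver Q I) a (psi Q I S) p"
        using \<open>w = tl_of Q a\<close> by (simp add: p cyc_deriv_def e)
      finally show ?thesis .
    qed
  qed
qed

lemma psi_cyc_deriv_out:
  assumes I: "I \<subseteq> verts Q" and pot: "potential Q S" and nl: "no_loops Q"
    and a: "a \<in> arrs Q" "a \<notin> arrs (restrict_quiver Q I)"
  shows "psi Q I (cyc_deriv Q a S) = cp_zero"
proof (rule ext)
  fix p :: "('a, 'b) path"
  obtain w ys where p: "p = (w, ys)" by (cases p)
  have z: "S (hd_of Q (hd (rotate k (ys @ [a]))), rotate k (ys @ [a])) = 0"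
    if v: "valid_path (RQ Q I) (w, ys)" and w: "w = tl_of Q a" for k
  proof (rule ccontr)
    let ?r = "rotate k (ys @ [a])"
    assume nz: "S (hd_of Q (hd ?r), ?r) \<noteq> 0"
    have cp: "cyclic_path Q (hd_of Q (hd ?r), ?r)" using pot nz by (auto simp: potential_def)
    have cc: "cyc_comp Q (ys @ [a])" using cp cyclic_path_iff cyc_comp_rotate_rev by metis
    show False
    proof (cases ys)
      case Nil
      then show ?thesis using cyc_comp_snoc(3)[OF cc] nl a by (auto simp: no_loops_def)
    next
      case (Cons b zs)
      have s: "set ys \<subseteq> arrs (RQ Q I)" using valid_RQ[OF I] v by blast
      have "hd ys \<in> set ys" "last ys \<in> set ys" using Cons by auto
      then have "hd_of Q (hd ys) \<in> I" "tl_of Q (last ys) \<in> I" using s by auto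
      then show ?thesis using cyc_comp_snoc(4)[OF cc] Cons a by auto
    qed
  qed
  show "psi Q I (cyc_deriv Q a S) p = cp_zero p"
    using z by (auto simp: p psi_def cyc_deriv_def cp_zero_def intro!: sum.neutral)
qed



definition cp_neg :: "('v, 'e, 'k::field) cpelem \<Rightarrow> ('v, 'e, 'k) cpelem" where
  "cp_neg f = (\<lambda>p. - f p)"

definition dcl :: "('v, 'e, 'k::field) cpelem set \<Rightarrow> bool" where
  "dcl U \<longleftrightarrow> cp_zero \<in> U \<and> (\<forall>x\<in>U. \<forall>y\<in>U. cp_diff x y \<in> U)"

lemma mult_neg_left: "cp_mult Q (cp_neg x) y = cp_neg (cp_mult Q x y)"
  by (rule ext) (auto simp: cp_mult_def cp_neg_def sum_negf split: prod.splits)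

lemma mult_zero_left: "cp_mult Q cp_zero y = cp_zero"
  by (rule ext) (auto simp: cp_mult_def cp_zero_def split: prod.splits)

lemma mult_zero_right: "cp_mult Q x cp_zero = cp_zero"
  by (rule ext) (auto simp: cp_mult_def cp_zero_def split: prod.splits)

lemma cpa_neg: "x \<in> cpa Q \<Longrightarrow> cp_neg x \<in> cpa Q"
  by (simp add: cpa_def cp_neg_def)

lemma cpa_diff: "x \<in> cpa Q \<Longrightarrow> y \<in> cpa Q \<Longrightarrow> cp_diff x y \<in> cpa Q"
  by (simp add: cpa_def cp_diff_def) metis

lemma cpa_add: "x \<in> cpa Q \<Longrightarrow> y \<in> cpa Q \<Longrightarrow> cp_add x y \<in> cpa Q"
  by (simp add: cpa_def cp_add_def) (metis add.right_neutral)

lemma cpa_zero: "cp_zero \<in> cpa Q"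
  by (simp add: cpa_def cp_zero_def)

lemma dcl_intro:
  assumes "cp_zero \<in> U" "\<And>x y. x \<in> U \<Longrightarrow> y \<in> U \<Longrightarrow> cp_add x y \<in> U"
    "\<And>x. x \<in> U \<Longrightarrow> cp_neg x \<in> U"
  shows "dcl U"
proof -
  have "cp_diff x y = cp_add x (cp_neg y)" for x y :: "('a, 'b, 'c) cpelem"
    by (simp add: cp_diff_def cp_add_def cp_neg_def)
  then show ?thesis using assms by (simp add: dcl_def)
qed

lemma dcl_zero: "dcl U \<Longrightarrow> cp_zero \<in> U" by (simp add: dcl_def)
lemma dcl_diff: "dcl U \<Longrightarrow> x \<in> U \<Longrightarrow> y \<in> U \<Longrightarrow> cp_diff x y \<in> U" by (simp add: dcl_def)
lemma dcl_add:
  assumes "dcl U" "x \<in> U" "y \<in> U" shows "cp_add x y \<in> U"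
proof -
  have "cp_add x y = cp_diff x (cp_diff cp_zero y)"
    by (simp add: cp_diff_def cp_add_def cp_zero_def)
  then show ?thesis using assms by (simp add: dcl_def)
qed

lemma gen_ideal_neg: "u \<in> gen_ideal Q G \<Longrightarrow> cp_neg u \<in> gen_ideal Q G"
proof (induction rule: gen_ideal.induct)
  case gi_zero
  have "cp_neg cp_zero = (cp_zero :: ('a,'b,'c) cpelem)" by (simp add: cp_neg_def cp_zero_def)
  then show ?case by (simp add: gen_ideal.gi_zero)
next
  case (gi_gen g x y)
  have "cp_neg (cp_mult Q (cp_mult Q x g) y) = cp_mult Q (cp_mult Q (cp_neg x) g) y"
    by (simp add: mult_neg_left)
  then show ?case using gi_gen by (simp add: gen_ideal.gi_gen cpa_neg)
next
  case (gi_add u w)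
  have "cp_neg (cp_add u w) = cp_add (cp_neg u) (cp_neg w)" by (simp add: cp_neg_def cp_add_def)
  then show ?case using gi_add by (simp add: gen_ideal.gi_add)
qed

lemma dcl_gen_ideal: "dcl (gen_ideal Q G)"
  by (rule dcl_intro) (auto intro: gen_ideal.intros gen_ideal_neg)

lemma comm_span_neg: "u \<in> comm_span Q \<Longrightarrow> cp_neg u \<in> comm_span Q"
proof (induction rule: comm_span.induct)
  case cs_zero
  have "cp_neg cp_zero = (cp_zero :: ('a,'b,'c) cpelem)" by (simp add: cp_neg_def cp_zero_def)
  then show ?case by (simp add: comm_span.cs_zero)
next
  case (cs_comm x y)
  have "cp_neg (cp_diff (cp_mult Q x y) (cp_mult Q y x)) = cp_diff (cp_mult Q y x) (cp_mult Q x y)"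
    by (simp add: cp_neg_def cp_diff_def)
  then show ?case using cs_comm by (simp add: comm_span.cs_comm)
next
  case (cs_add u w)
  have "cp_neg (cp_add u w) = cp_add (cp_neg u) (cp_neg w)" by (simp add: cp_neg_def cp_add_def)
  then show ?case using cs_add by (simp add: comm_span.cs_add)
qed

lemma dcl_comm_span: "dcl (comm_span Q)"
  by (rule dcl_intro) (auto intro: comm_span.intros comm_span_neg)

lemma dcl_madic: assumes "dcl U" shows "dcl (madic_closure Q U)"
  unfolding dcl_def
proof (intro conjI ballI)
  show "cp_zero \<in> madic_closure Q U"
    using dcl_zero[OF assms] by (auto simp: madic_closure_def cpa_zero)
next
  fix x y assume x: "x \<in> madic_closure Q U" and y: "y \<in> madic_closure Q U"
  show "cp_diff x y \<in> madic_closure Q U"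
    unfolding madic_closure_def
  proof (intro CollectI conjI allI)
    show "cp_diff x y \<in> cpa Q" using x y by (simp add: madic_closure_def cpa_diff)
  next
    fix n
    obtain u where "u \<in> U" "\<forall>p. length (snd p) < n \<longrightarrow> x p = u p"
      using x unfolding madic_closure_def by blast
    moreover obtain w where "w \<in> U" "\<forall>p. length (snd p) < n \<longrightarrow> y p = w p"
      using y unfolding madic_closure_def by blast
    ultimately show "\<exists>u\<in>U. \<forall>p. length (snd p) < n \<longrightarrow> cp_diff x y p = u p"
      using dcl_diff[OF assms] by (intro bexI[of _ "cp_diff u w"]) (auto simp: cp_diff_def)
  qed
qed

lemma dcl_sumset:
  assumes "dcl U" "dcl V"
  shows "dcl {cp_add u v | u v. u \<in> U \<and> v \<in> V}"
  unfolding dcl_def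
proof (intro conjI ballI)
  have "cp_zero = cp_add cp_zero (cp_zero :: ('a,'b,'c) cpelem)" by (simp add: cp_add_def cp_zero_def)
  then show "cp_zero \<in> {cp_add u v | u v. u \<in> U \<and> v \<in> V}"
    using dcl_zero[OF assms(1)] dcl_zero[OF assms(2)] by blast
next
  fix x y assume "x \<in> {cp_add u v | u v. u \<in> U \<and> v \<in> V}" "y \<in> {cp_add u v | u v. u \<in> U \<and> v \<in> V}"
  then obtain u v u' v' where "x = cp_add u v" "y = cp_add u' v'" "u \<in> U" "v \<in> V" "u' \<in> U" "v' \<in> V"
    by blast
  moreover have "cp_diff (cp_add u v) (cp_add u' v') = cp_add (cp_diff u u') (cp_diff v v')"
    by (simp add: cp_diff_def cp_add_def algebra_simps)
  ultimately show "cp_diff x y \<in> {cp_add u v | u v. u \<in> U \<and> v \<in> V}"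
    using dcl_diff[OF assms(1)] dcl_diff[OF assms(2)] by blast
qed

lemma dcl_R_part: "dcl (R_part Q :: ('v,'e,'k::field) cpelem set)"
  unfolding dcl_def
proof (intro conjI ballI)
  show "cp_zero \<in> R_part Q" unfolding R_part_def using cpa_zero by (simp add: cp_zero_def)
next
  fix x y :: "('v,'e,'k) cpelem" assume x: "x \<in> R_part Q" and y: "y \<in> R_part Q"
  have "cp_diff x y \<in> cpa Q" using x y cpa_diff unfolding R_part_def by blast
  moreover have "\<forall>p. cp_diff x y p \<noteq> 0 \<longrightarrow> snd p = []"
    using x y unfolding R_part_def cp_diff_def by (metis (mono_tags, lifting) mem_Collect_eq diff_self)
  ultimately show "cp_diff x y \<in> R_part Q" unfolding R_part_def by blast
qed

lemma dcl_jac: "dcl (jac_ideal Q S)"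
  unfolding jac_ideal_def by (rule dcl_madic[OF dcl_gen_ideal])

lemma dcl_def_sub: "dcl (def_sub Q S)"
  unfolding def_sub_def
  by (rule dcl_sumset[OF dcl_madic[OF dcl_sumset[OF dcl_jac dcl_comm_span]] dcl_R_part])

lemma equiv_rel:
  assumes "dcl U"
  shows "equiv (cpa Q) {(f, g). f \<in> cpa Q \<and> g \<in> cpa Q \<and> cp_diff f g \<in> U}"
proof (rule equivI)
  have z: "cp_diff f f = cp_zero" for f :: "('a,'b,'c) cpelem" by (simp add: cp_diff_def cp_zero_def)
  show "refl_on (cpa Q) {(f, g). f \<in> cpa Q \<and> g \<in> cpa Q \<and> cp_diff f g \<in> U}"
    using dcl_zero[OF assms] by (auto simp: refl_on_def z)
  have s: "cp_diff g f = cp_diff cp_zero (cp_diff f g)" for f g :: "('a,'b,'c) cpelem"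
    by (simp add: cp_diff_def cp_zero_def)
  show "sym {(f, g). f \<in> cpa Q \<and> g \<in> cpa Q \<and> cp_diff f g \<in> U}"
    unfolding sym_def
  proof (clarsimp)
    fix f g assume "f \<in> cpa Q" "g \<in> cpa Q" "cp_diff f g \<in> U"
    then show "cp_diff g f \<in> U" using dcl_zero[OF assms] dcl_diff[OF assms] s[of g f] by metis
  qed
  have t: "cp_diff f h = cp_diff (cp_diff f g) (cp_diff cp_zero (cp_diff g h))" for f g h :: "('a,'b,'c) cpelem"
    by (simp add: cp_diff_def cp_zero_def)
  show "trans {(f, g). f \<in> cpa Q \<and> g \<in> cpa Q \<and> cp_diff f g \<in> U}"
    unfolding trans_def
  proof (clarsimp)
    fix f g h assume "f \<in> cpa Q" "g \<in> cpa Q" "h \<in> cpa Q" "cp_diff f g \<in> U" "cp_diff g h \<in> U"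
    then show "cp_diff f h \<in> U" using dcl_zero[OF assms] dcl_diff[OF assms] t[of f h g] by metis
  qed
qed auto

lemma equiv_jac: "equiv (cpa Q) (jac_rel Q S)"
  using equiv_rel[OF dcl_jac, of Q Q S] by (simp add: jac_rel_def)

lemma equiv_def_rel: "equiv (cpa Q) (def_rel Q S)"
  using equiv_rel[OF dcl_def_sub, of Q Q S] by (simp add: def_rel_def)



lemma psi_add: "psi Q I (cp_add f g) = cp_add (psi Q I f) (psi Q I g)"
  by (rule ext) (simp add: psi_def cp_add_def)
lemma psi_diff: "psi Q I (cp_diff f g) = cp_diff (psi Q I f) (psi Q I g)"
  by (rule ext) (simp add: psi_def cp_diff_def)
lemma psi_smult: "psi Q I (cp_smult c f) = cp_smult c (psi Q I f)"
  by (rule ext) (simp add: psi_def cp_smult_def)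
lemma psi_zero: "psi Q I cp_zero = cp_zero"
  by (rule ext) (simp add: psi_def cp_zero_def)

lemma psi_one:
  assumes I: "I \<subseteq> verts Q" shows "psi Q I (cp_one Q) = cp_one (restrict_quiver Q I)"
proof (rule ext)
  fix p :: "('a,'b) path"
  obtain v xs where p: "p = (v, xs)" by (cases p)
  show "psi Q I (cp_one Q) p = cp_one (restrict_quiver Q I) p"
    using I by (cases xs) (auto simp: p psi_def cp_one_def valid_path_def)
qed

lemma psi_cpa: "psi Q I f \<in> cpa (restrict_quiver Q I)"
  by (simp add: cpa_def psi_def)

lemma valid_RQ_Q: "I \<subseteq> verts Q \<Longrightarrow> valid_path (restrict_quiver Q I) p \<Longrightarrow> valid_path Q p"
  using valid_RQ[of I Q "fst p" "snd p"] by simp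

lemma cpa_RQ: "I \<subseteq> verts Q \<Longrightarrow> g \<in> cpa (restrict_quiver Q I) \<Longrightarrow> g \<in> cpa Q"
  unfolding cpa_def using valid_RQ_Q by blast

lemma psi_id: "g \<in> cpa (restrict_quiver Q I) \<Longrightarrow> psi Q I g = g"
  by (rule ext) (auto simp: psi_def cpa_def)

lemma psi_image: "I \<subseteq> verts Q \<Longrightarrow> psi Q I ` cpa Q = cpa (restrict_quiver Q I)"
proof -
  assume I: "I \<subseteq> verts Q"
  show ?thesis
  proof
    show "psi Q I ` cpa Q \<subseteq> cpa (restrict_quiver Q I)" using psi_cpa by blast
    show "cpa (restrict_quiver Q I) \<subseteq> psi Q I ` cpa Q"
    proof
      fix g assume g: "g \<in> cpa (restrict_quiver Q I)"
      then have "g = psi Q I g" using psi_id by metis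
      moreover have "g \<in> cpa Q" using cpa_RQ[OF I g] .
      ultimately show "g \<in> psi Q I ` cpa Q" by blast
    qed
  qed
qed

lemma psi_madic:
  assumes "f \<in> madic_closure Q U"
  shows "psi Q I f \<in> madic_closure (restrict_quiver Q I) (psi Q I ` U)"
  unfolding madic_closure_def
proof (intro CollectI conjI allI)
  show "psi Q I f \<in> cpa (restrict_quiver Q I)" by (rule psi_cpa)
  fix n
  obtain u where "u \<in> U" "\<forall>p. length (snd p) < n \<longrightarrow> f p = u p"
    using assms unfolding madic_closure_def by blast
  then show "\<exists>u\<in>psi Q I ` U. \<forall>p. length (snd p) < n \<longrightarrow> psi Q I f p = u p"
    by (intro bexI[of _ "psi Q I u"]) (auto simp: psi_def)
qed

lemma madic_mono: "U \<subseteq> V \<Longrightarrow> madic_closure Q U \<subseteq> madic_closure Q V"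
  unfolding madic_closure_def by blast

lemma psi_gen_ideal:
  assumes I: "I \<subseteq> verts Q" and pot: "potential Q S" and nl: "no_loops Q"
  shows "u \<in> gen_ideal Q {cyc_deriv Q a S | a. a \<in> arrs Q} \<Longrightarrow>
    psi Q I u \<in> gen_ideal (restrict_quiver Q I)
       {cyc_deriv (restrict_quiver Q I) a (psi Q I S) | a. a \<in> arrs (restrict_quiver Q I)}"
proof (induction rule: gen_ideal.induct)
  case gi_zero
  then show ?case by (simp add: psi_zero gen_ideal.gi_zero)
next
  case (gi_gen g x y)
  then obtain a where a: "a \<in> arrs Q" "g = cyc_deriv Q a S" by blast
  have e: "psi Q I (cp_mult Q (cp_mult Q x g) y) =
      cp_mult (restrict_quiver Q I) (cp_mult (restrict_quiver Q I) (psi Q I x) (psi Q I g)) (psi Q I y)"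
    by (simp only: psi_mult[OF I])
  show ?case
  proof (cases "a \<in> arrs (restrict_quiver Q I)")
    case True
    then have "psi Q I g = cyc_deriv (restrict_quiver Q I) a (psi Q I S)"
      using psi_cyc_deriv_in[OF I pot] a by simp
    then have "psi Q I g \<in> {cyc_deriv (restrict_quiver Q I) a (psi Q I S) | a. a \<in> arrs (restrict_quiver Q I)}"
      using True by blast
    then show ?thesis unfolding e by (rule gen_ideal.gi_gen[OF _ psi_cpa psi_cpa])
  next
    case False
    then have "psi Q I g = cp_zero" using psi_cyc_deriv_out[OF I pot nl] a by simp
    then show ?thesis unfolding e by (simp add: mult_zero_left mult_zero_right gen_ideal.gi_zero)
  qed
next
  case (gi_add u w)
  then show ?case by (simp add: psi_add gen_ideal.gi_add)
qed

lemma psi_jac: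
  assumes I: "I \<subseteq> verts Q" and pot: "potential Q S" and nl: "no_loops Q"
    and f: "f \<in> jac_ideal Q S"
  shows "psi Q I f \<in> jac_ideal (restrict_quiver Q I) (psi Q I S)"
proof -
  have "psi Q I f \<in> madic_closure (restrict_quiver Q I)
     (psi Q I ` gen_ideal Q {cyc_deriv Q a S | a. a \<in> arrs Q})"
    using f psi_madic unfolding jac_ideal_def by blast
  moreover have "psi Q I ` gen_ideal Q {cyc_deriv Q a S | a. a \<in> arrs Q} \<subseteq>
     gen_ideal (restrict_quiver Q I)
       {cyc_deriv (restrict_quiver Q I) a (psi Q I S) | a. a \<in> arrs (restrict_quiver Q I)}"
    using psi_gen_ideal[OF I pot nl] by blast
  ultimately show ?thesis unfolding jac_ideal_def using madic_mono by blast
qed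

lemma psi_comm:
  assumes I: "I \<subseteq> verts Q"
  shows "u \<in> comm_span Q \<Longrightarrow> psi Q I u \<in> comm_span (restrict_quiver Q I)"
proof (induction rule: comm_span.induct)
  case cs_zero then show ?case by (simp add: psi_zero comm_span.cs_zero)
next
  case (cs_comm x y)
  have "psi Q I (cp_diff (cp_mult Q x y) (cp_mult Q y x)) =
     cp_diff (cp_mult (restrict_quiver Q I) (psi Q I x) (psi Q I y))
             (cp_mult (restrict_quiver Q I) (psi Q I y) (psi Q I x))"
    by (simp only: psi_diff psi_mult[OF I])
  then show ?case by (simp only:) (rule comm_span.cs_comm; rule psi_cpa)
next
  case (cs_add u w) then show ?case by (simp add: psi_add comm_span.cs_add)
qed

lemma psi_R: "r \<in> R_part Q \<Longrightarrow> psi Q I r \<in> R_part (restrict_quiver Q I)"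
proof -
  assume r: "r \<in> R_part Q"
  have "\<forall>p. psi Q I r p \<noteq> 0 \<longrightarrow> snd p = []" using r by (auto simp: R_part_def psi_def)
  then show ?thesis using psi_cpa[of Q I r] by (simp add: R_part_def)
qed

lemma psi_def_sub:
  assumes I: "I \<subseteq> verts Q" and pot: "potential Q S" and nl: "no_loops Q"
    and f: "f \<in> def_sub Q S"
  shows "psi Q I f \<in> def_sub (restrict_quiver Q I) (psi Q I S)"
proof -
  define U where "U = {cp_add j c | j c. j \<in> jac_ideal Q S \<and> c \<in> comm_span Q}"
  define U' where "U' = {cp_add j c | j c. j \<in> jac_ideal (restrict_quiver Q I) (psi Q I S) \<and> c \<in> comm_span (restrict_quiver Q I)}"
  have ds: "def_sub Q S = {cp_add u r | u r. u \<in> madic_closure Q U \<and> r \<in> R_part Q}"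
    unfolding def_sub_def U_def ..
  have ds': "def_sub (restrict_quiver Q I) (psi Q I S) = {cp_add u r | u r. u \<in> madic_closure (restrict_quiver Q I) U' \<and> r \<in> R_part (restrict_quiver Q I)}"
    unfolding def_sub_def U'_def ..
  obtain u r where f: "f = cp_add u r" and r: "r \<in> R_part Q" and u: "u \<in> madic_closure Q U"
    using f unfolding ds by blast
  have sub: "psi Q I ` U \<subseteq> U'"
  proof
    fix x assume "x \<in> psi Q I ` U"
    then obtain j c where x: "x = psi Q I (cp_add j c)" and j: "j \<in> jac_ideal Q S" and c: "c \<in> comm_span Q"
      unfolding U_def by blast
    have "x = cp_add (psi Q I j) (psi Q I c)" using x psi_add by metis
    moreover have "psi Q I j \<in> jac_ideal (restrict_quiver Q I) (psi Q I S)" by (rule psi_jac[OF I pot nl j])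
    moreover have "psi Q I c \<in> comm_span (restrict_quiver Q I)" by (rule psi_comm[OF I c])
    ultimately show "x \<in> U'" unfolding U'_def by blast
  qed
  have pu: "psi Q I u \<in> madic_closure (restrict_quiver Q I) U'"
    using subsetD[OF madic_mono[OF sub] psi_madic[OF u]] .
  have pr: "psi Q I r \<in> R_part (restrict_quiver Q I)" using psi_R[OF r] .
  have "psi Q I f = cp_add (psi Q I u) (psi Q I r)" unfolding f by (rule psi_add)
  then show ?thesis unfolding ds' using pu pr by blast
qed

lemma induced_generic:
  assumes eA: "equiv A R" and eB: "equiv B R'" and h: "\<And>f g. (f, g) \<in> R \<Longrightarrow> (h f, h g) \<in> R'"
    and im: "h ` A = B"
  shows "\<forall>f\<in>A. R' `` {h (SOME x. x \<in> R `` {f})} = R' `` {h f}"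
    and "(\<lambda>C. R' `` {h (SOME x. x \<in> C)}) ` (A // R) = B // R'"
proof -
  have cl: "R' `` {h (SOME x. x \<in> R `` {f})} = R' `` {h f}" if f: "f \<in> A" for f
  proof -
    have "f \<in> R `` {f}" using eA f by (auto simp: equiv_def refl_on_def)
    then have "(SOME x. x \<in> R `` {f}) \<in> R `` {f}" by (rule someI)
    then have "(f, SOME x. x \<in> R `` {f}) \<in> R" by simp
    then have "(h f, h (SOME x. x \<in> R `` {f})) \<in> R'" by (rule h)
    then show ?thesis using eB equiv_class_eq by metis
  qed
  then show "\<forall>f\<in>A. R' `` {h (SOME x. x \<in> R `` {f})} = R' `` {h f}" by blast
  show "(\<lambda>C. R' `` {h (SOME x. x \<in> C)}) ` (A // R) = B // R'"
  proof -
    have q: "X // T = (\<lambda>f. T `` {f}) ` X" for X :: "'a set" and T :: "('a \<times> 'a) set"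
      by (auto simp: quotient_def)
    have "(\<lambda>C. R' `` {h (SOME x. x \<in> C)}) ` (A // R) = (\<lambda>f. R' `` {h (SOME x. x \<in> R `` {f})}) ` A"
      unfolding q image_image ..
    also have "\<dots> = (\<lambda>f. R' `` {h f}) ` A" using cl by (rule image_cong[OF refl])
    also have "\<dots> = (\<lambda>b. R' `` {b}) ` (h ` A)" by (simp add: image_image)
    also have "\<dots> = B // R'" unfolding im by (auto simp: quotient_def)
    finally show ?thesis .
  qed
qed



lemma psi_lincomb:
  "psi Q I (\<lambda>p. \<Sum>x\<in>F. c x * x p) = (\<lambda>p. \<Sum>x\<in>F. c x * psi Q I x p)"
  by (rule ext) (simp add: psi_def)

lemma lincomb_image:
  fixes c :: "'x \<Rightarrow> 'k::field" and h :: "'x \<Rightarrow> 'p \<Rightarrow> 'k"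
  assumes "finite F"
  shows "(\<lambda>p. \<Sum>x\<in>F. c x * h x p) =
    (\<lambda>p. \<Sum>y\<in>h ` F. (\<Sum>x\<in>{x \<in> F. h x = y}. c x) * y p)"
proof (rule ext)
  fix p
  have "(\<Sum>x\<in>F. c x * h x p) = (\<Sum>y\<in>h ` F. \<Sum>x\<in>{x \<in> F. h x = y}. c x * h x p)"
    by (rule sum.image_gen[OF assms])
  also have "\<dots> = (\<Sum>y\<in>h ` F. (\<Sum>x\<in>{x \<in> F. h x = y}. c x) * y p)"
  proof (rule sum.cong[OF refl])
    fix y assume "y \<in> h ` F"
    have "(\<Sum>x\<in>{x \<in> F. h x = y}. c x * h x p) = (\<Sum>x\<in>{x \<in> F. h x = y}. c x * y p)"
      by (rule sum.cong) auto
    then show "(\<Sum>x\<in>{x \<in> F. h x = y}. c x * h x p) = (\<Sum>x\<in>{x \<in> F. h x = y}. c x) * y p"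
      by (simp add: sum_distrib_right)
  qed
  finally show "(\<Sum>x\<in>F. c x * h x p) = (\<Sum>y\<in>h ` F. (\<Sum>x\<in>{x \<in> F. h x = y}. c x) * y p)" .
qed

lemma fin_dim_restrict:
  fixes S :: "('v,'e,'k::field) cpelem"
  assumes I: "I \<subseteq> verts Q" and pot: "potential Q S" and nl: "no_loops Q"
    and fd: "jac_fin_dim Q S"
  shows "jac_fin_dim (restrict_quiver Q I) (psi Q I S)"
proof -
  obtain F where F: "finite F" "F \<subseteq> cpa Q"
    and sp: "\<forall>f\<in>cpa Q. \<exists>c. cp_diff f (\<lambda>p. \<Sum>x\<in>F. c x * x p) \<in> jac_ideal Q S"
    using fd unfolding jac_fin_dim_def by blast
  show ?thesis unfolding jac_fin_dim_def
  proof (intro exI[of _ "psi Q I ` F"] conjI ballI)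
    show "finite (psi Q I ` F)" using F by simp
    show "psi Q I ` F \<subseteq> cpa (restrict_quiver Q I)" using psi_cpa by blast
    fix f :: "('v,'e,'k) cpelem" assume f: "f \<in> cpa (restrict_quiver Q I)"
    then have fQ: "f \<in> cpa Q" using cpa_RQ[OF I] by blast
    obtain c where c: "cp_diff f (\<lambda>p. \<Sum>x\<in>F. c x * x p) \<in> jac_ideal Q S"
      using sp fQ by blast
    have "psi Q I (cp_diff f (\<lambda>p. \<Sum>x\<in>F. c x * x p)) \<in> jac_ideal (restrict_quiver Q I) (psi Q I S)"
      by (rule psi_jac[OF I pot nl c])
    moreover have "psi Q I (cp_diff f (\<lambda>p. \<Sum>x\<in>F. c x * x p)) =
       cp_diff f (\<lambda>p. \<Sum>y\<in>psi Q I ` F. (\<Sum>x\<in>{x \<in> F. psi Q I x = y}. c x) * y p)"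
      unfolding psi_diff psi_lincomb psi_id[OF f] lincomb_image[OF F(1), of c "psi Q I"] ..
    ultimately show "\<exists>c. cp_diff f (\<lambda>p. \<Sum>x\<in>psi Q I ` F. c x * x p) \<in> jac_ideal (restrict_quiver Q I) (psi Q I S)"
      by auto
  qed
qed

lemma rigid_restrict:
  fixes S :: "('v,'e,'k::field) cpelem"
  assumes I: "I \<subseteq> verts Q" and pot: "potential Q S" and nl: "no_loops Q"
    and r: "rigid Q S"
  shows "rigid (restrict_quiver Q I) (psi Q I S)"
  unfolding rigid_def
proof
  fix f :: "('v,'e,'k) cpelem" assume f: "f \<in> cpa (restrict_quiver Q I)"
  then have "f \<in> def_sub Q S" using cpa_RQ[OF I] r unfolding rigid_def by blast
  then have "psi Q I f \<in> def_sub (restrict_quiver Q I) (psi Q I S)" by (rule psi_def_sub[OF I pot nl])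
  then show "f \<in> def_sub (restrict_quiver Q I) (psi Q I S)" using psi_id[OF f] by simp
qed

theorem proposition8p9:
  fixes Q :: "('v, 'e) quiver" and S :: "('v, 'e, 'k::field) cpelem" and I :: "'v set"
  assumes QP: "is_QP Q S"
    and I: "I \<subseteq> verts Q"
  shows
    \<comment> \<open>psi_I is a (unital, K-linear) algebra homomorphism of R<<A>> onto R<<A|_I>>\<close>
    "psi Q I ` cpa Q = cpa (restrict_quiver Q I)
     \<and> (\<forall>f::('v, 'e, 'k) cpelem. \<forall>g::('v, 'e, 'k) cpelem. f \<in> cpa Q \<longrightarrow> g \<in> cpa Q \<longrightarrow>
          psi Q I (cp_add f g) = cp_add (psi Q I f) (psi Q I g)
        \<and> psi Q I (cp_mult Q f g) = cp_mult (restrict_quiver Q I) (psi Q I f) (psi Q I g))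
     \<and> (\<forall>(c::'k) (f::('v, 'e, 'k) cpelem). f \<in> cpa Q \<longrightarrow> psi Q I (cp_smult c f) = cp_smult c (psi Q I f))
     \<and> psi Q I (cp_one Q) = cp_one (restrict_quiver Q I)
     \<comment> \<open>it induces an epimorphism P(A,S) -> P(A|_I, S|_I)\<close>
     \<and> (\<forall>f g. (f, g) \<in> jac_rel Q S \<longrightarrow>
          (psi Q I f, psi Q I g) \<in> jac_rel (restrict_quiver Q I) (psi Q I S))
     \<and> (\<forall>f\<in>cpa Q. jac_induced Q I S (jac_rel Q S `` {f})
          = jac_rel (restrict_quiver Q I) (psi Q I S) `` {psi Q I f})
     \<and> jac_induced Q I S ` jacobian_algebra Q S
          = jacobian_algebra (restrict_quiver Q I) (psi Q I S)
     \<comment> \<open>and an epimorphism Def(A,S) -> Def(A|_I, S|_I)\<close>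
     \<and> (\<forall>f g. (f, g) \<in> def_rel Q S \<longrightarrow>
          (psi Q I f, psi Q I g) \<in> def_rel (restrict_quiver Q I) (psi Q I S))
     \<and> (\<forall>f\<in>cpa Q. def_induced Q I S (def_rel Q S `` {f})
          = def_rel (restrict_quiver Q I) (psi Q I S) `` {psi Q I f})
     \<and> def_induced Q I S ` def_space Q S
          = def_space (restrict_quiver Q I) (psi Q I S)
     \<comment> \<open>consequences\<close>
     \<and> (jac_fin_dim Q S \<longrightarrow> jac_fin_dim (restrict_quiver Q I) (psi Q I S))
     \<and> (rigid Q S \<longrightarrow> rigid (restrict_quiver Q I) (psi Q I S))"
  proof -
  have pot: "potential Q S" and nl: "no_loops Q" using QP by (auto simp: is_QP_def)
  have img: "psi Q I ` cpa Q = cpa (restrict_quiver Q I)" by (rule psi_image[OF I])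
  have jr: "(psi Q I f, psi Q I g) \<in> jac_rel (restrict_quiver Q I) (psi Q I S)"
    if "(f, g) \<in> jac_rel Q S" for f g
    using that psi_jac[OF I pot nl, of "cp_diff f g"] by (simp add: jac_rel_def psi_cpa psi_diff)
  have dr: "(psi Q I f, psi Q I g) \<in> def_rel (restrict_quiver Q I) (psi Q I S)"
    if "(f, g) \<in> def_rel Q S" for f g
    using that psi_def_sub[OF I pot nl, of "cp_diff f g"] by (simp add: def_rel_def psi_cpa psi_diff)
  have ji: "jac_induced Q I S = (\<lambda>C. jac_rel (restrict_quiver Q I) (psi Q I S) `` {psi Q I (SOME x. x \<in> C)})"
    by (rule ext) (simp add: jac_induced_def)
  have di: "def_induced Q I S = (\<lambda>C. def_rel (restrict_quiver Q I) (psi Q I S) `` {psi Q I (SOME x. x \<in> C)})"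
    by (rule ext) (simp add: def_induced_def)
  note gj = induced_generic[OF equiv_jac equiv_jac jr img]
  note gd = induced_generic[OF equiv_def_rel equiv_def_rel dr img]
  show ?thesis
  proof (intro conjI allI impI)
    show "psi Q I ` cpa Q = cpa (restrict_quiver Q I)" by (rule img)
  next
    fix f g :: "('v,'e,'k) cpelem"
    show "psi Q I (cp_add f g) = cp_add (psi Q I f) (psi Q I g)" by (rule psi_add)
    show "psi Q I (cp_mult Q f g) = cp_mult (restrict_quiver Q I) (psi Q I f) (psi Q I g)"
      by (rule psi_mult[OF I])
  next
    fix c :: 'k and f :: "('v,'e,'k) cpelem"
    show "psi Q I (cp_smult c f) = cp_smult c (psi Q I f)" by (rule psi_smult)
  next
    show "psi Q I (cp_one Q) = cp_one (restrict_quiver Q I)" by (rule psi_one[OF I])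
  next
    fix f g assume "(f, g) \<in> jac_rel Q S" then show "(psi Q I f, psi Q I g) \<in> jac_rel (restrict_quiver Q I) (psi Q I S)"
      by (rule jr)
  next
    show "\<forall>f\<in>cpa Q. jac_induced Q I S (jac_rel Q S `` {f})
          = jac_rel (restrict_quiver Q I) (psi Q I S) `` {psi Q I f}"
      unfolding ji by (rule gj(1))
  next
    show "jac_induced Q I S ` jacobian_algebra Q S = jacobian_algebra (restrict_quiver Q I) (psi Q I S)"
      unfolding ji jacobian_algebra_def by (rule gj(2))
  next
    fix f g assume "(f, g) \<in> def_rel Q S" then show "(psi Q I f, psi Q I g) \<in> def_rel (restrict_quiver Q I) (psi Q I S)"
      by (rule dr)
  next
    show "\<forall>f\<in>cpa Q. def_induced Q I S (def_rel Q S `` {f})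
          = def_rel (restrict_quiver Q I) (psi Q I S) `` {psi Q I f}"
      unfolding di by (rule gd(1))
  next
    show "def_induced Q I S ` def_space Q S = def_space (restrict_quiver Q I) (psi Q I S)"
      unfolding di def_space_def by (rule gd(2))
  next
    assume "jac_fin_dim Q S" then show "jac_fin_dim (restrict_quiver Q I) (psi Q I S)"
      by (rule fin_dim_restrict[OF I pot nl])
  next
    assume "rigid Q S" then show "rigid (restrict_quiver Q I) (psi Q I S)"
      by (rule rigid_restrict[OF I pot nl])
  qed
qed

end
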